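(* Fix $\alpha\in(0,1]$. For any sequence of labels containing $n$ distinct labels and any regressor values in $[0,1]$ used in the decisions, the tree produced by the online tree construction below (which has $n$ leaves) has depth at most $\dfrac{\log n}{\log(1/\kappa)}+2$ (for $\alpha=1$, where $\kappa=1/2$, this reads $\log_2 n+2$).
   Context: For $p\in[0,1]$, positive integers $L,R$ and $\alpha\in(0,1]$, define $\mathrm{obj}(p,L,R,\alpha)=(1-\alpha)\,2\,(p-\tfrac12)+\alpha\log_2\frac{L}{R}$, and $\kappa=\dfrac{1}{1+2^{1-1/\alpha}}$ (so $\kappa\in[1/2,1)$). Online tree construction: the tree is a rooted binary tree in which every internal node has a left and a right child, and whose leaves correspond one-to-one to the distinct labels seen so far; it starts as a single leaf (the first label). When a label not yet in the tree arrives, it descends from the root: at each internal node, with $L,R$ the current numbers of leaves in its left and right subtrees and $p\in[0,1]$ an arbitrary value (the current regressor prediction at that node), it moves to the right child if $\mathrm{obj}(p,L,R,\alpha)>0$ and to the left child otherwise. On reaching a leaf (holding some label $y'$), that leaf becomes an internal node whose left child is a leaf with label $y'$ and whose right child is a new leaf with the new label. Labels already in the tree do not change its shape. The depth of the tree is the maximum number of edges on a root-to-leaf path. *)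

theory Defs
  imports Complex_Main
begin

definition obj :: "real \<Rightarrow> nat \<Rightarrow> nat \<Rightarrow> real \<Rightarrow> real" where
  "obj p L R \<alpha> = (1 - \<alpha>) * 2 * (p - 1/2) + \<alpha> * log 2 (real L / real R)"

definition kappa :: "real \<Rightarrow> real" where
  "kappa \<alpha> = 1 / (1 + 2 powr (1 - 1 / \<alpha>))"

datatype 'a ltree = Leaf 'a | Node "'a ltree" "'a ltree"

fun nleaves :: "'a ltree \<Rightarrow> nat" where
  "nleaves (Leaf _) = 1"
| "nleaves (Node l r) = nleaves l + nleaves r"

fun labels :: "'a ltree \<Rightarrow> 'a set" where
  "labels (Leaf y) = {y}"
| "labels (Node l r) = labels l \<union> labels r"

fun depth :: "'a ltree \<Rightarrow> nat" where
  "depth (Leaf _) = 0"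
| "depth (Node l r) = Suc (max (depth l) (depth r))"

text \<open>The regressor value used at an internal node is
  given by p applied to the path (False = left, True = right) from the root to
  that node; this is an arbitrary function, so arbitrary regressor values are allowed.\<close>
fun ins :: "real \<Rightarrow> (bool list \<Rightarrow> real) \<Rightarrow> bool list \<Rightarrow> 'a \<Rightarrow> 'a ltree \<Rightarrow> 'a ltree" where
  "ins \<alpha> p pth y (Leaf y') = Node (Leaf y') (Leaf y)"
| "ins \<alpha> p pth y (Node l r) =
     (if obj (p pth) (nleaves l) (nleaves r) \<alpha> > 0
      then Node l (ins \<alpha> p (pth @ [True]) y r)
      else Node (ins \<alpha> p (pth @ [False]) y l) r)"

definition step :: "real \<Rightarrow> (bool list \<Rightarrow> real) \<Rightarrow> 'a \<Rightarrow> 'a ltree \<Rightarrow> 'a ltree" where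
  "step \<alpha> p y t = (if y \<in> labels t then t else ins \<alpha> p [] y t)"

text \<open>Processing the remaining labels; ps i gives the regressor values used
  when the i-th subsequent label arrives.\<close>
fun build_aux :: "real \<Rightarrow> (nat \<Rightarrow> bool list \<Rightarrow> real) \<Rightarrow> nat \<Rightarrow> 'a list \<Rightarrow> 'a ltree \<Rightarrow> 'a ltree" where
  "build_aux \<alpha> ps i [] t = t"
| "build_aux \<alpha> ps i (y # ys) t = build_aux \<alpha> ps (Suc i) ys (step \<alpha> (ps i) y t)"

fun build :: "real \<Rightarrow> (nat \<Rightarrow> bool list \<Rightarrow> real) \<Rightarrow> 'a list \<Rightarrow> 'a ltree" where
  "build \<alpha> ps [] = undefined"
| "build \<alpha> ps (y # ys) = build_aux \<alpha> ps 0 ys (Leaf y)"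

end

theory Submission
  imports Defs
begin

lemma nleaves_pos: "nleaves t \<ge> 1"
  by (induction t) auto

lemma ins_nleaves: "nleaves (ins a p pth y t) = nleaves t + 1"
  by (induction t arbitrary: pth) auto

lemma ins_labels: "labels (ins a p pth y t) = insert y (labels t)"
  by (induction t arbitrary: pth) auto

lemma finite_labels: "finite (labels t)"
  by (induction t) auto

lemma obj_right:
  assumes "0<\<alpha>" "\<alpha>\<le>1" "0\<le>p" "p\<le>1" "L\<ge>1" "R\<ge>1" "obj p L R \<alpha> > 0"
  shows "2 powr (1-1/\<alpha>) * real R < real L"
proof -
  have "(1-\<alpha>)*(2*(p-1/2)) \<le> (1-\<alpha>)*1" by (rule mult_left_mono) (use assms in auto)
  hence "(1 - \<alpha>) * 2 * (p - 1/2) \<le> 1 - \<alpha>" by (simp add: algebra_simps)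
  hence "\<alpha> * log 2 (real L / real R) > -(1-\<alpha>)" using assms(7) unfolding obj_def by linarith
  hence "log 2 (real L / real R) > 1 - 1/\<alpha>" using assms(1)
    by (simp add: field_simps)
  hence "2 powr (1-1/\<alpha>) < 2 powr (log 2 (real L / real R))" by simp
  also have "\<dots> = real L / real R" using assms by simp
  finally show ?thesis using assms by (simp add: field_simps)
qed

lemma obj_left:
  assumes "0<\<alpha>" "\<alpha>\<le>1" "0\<le>p" "p\<le>1" "L\<ge>1" "R\<ge>1" "\<not> obj p L R \<alpha> > 0"
  shows "2 powr (1-1/\<alpha>) * real L \<le> real R"
proof -
  have "(1-\<alpha>)*(2*(p-1/2)) \<ge> (1-\<alpha>)*(-1)" by (rule mult_left_mono) (use assms in auto)
  hence "-(1-\<alpha>) \<le> (1 - \<alpha>) * 2 * (p - 1/2)" by (simp add: algebra_simps)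
  hence "\<alpha> * log 2 (real L / real R) \<le> 1-\<alpha>" using assms(7) unfolding obj_def by linarith
  hence "log 2 (real L / real R) \<le> 1/\<alpha> - 1" using assms(1)
    by (simp add: field_simps)
  hence "2 powr (log 2 (real L / real R)) \<le> 2 powr (1/\<alpha> - 1)" by simp
  hence "real L / real R \<le> 2 powr (1/\<alpha> - 1)" using assms by simp
  hence "real L \<le> real R * 2 powr (1/\<alpha> - 1)" using assms by (simp add: field_simps)
  hence "2 powr (1-1/\<alpha>) * real L \<le> 2 powr (1-1/\<alpha>) * (real R * 2 powr (1/\<alpha> - 1))"
    by (simp add: mult_left_mono)
  also have "\<dots> = real R * 2 powr ((1-1/\<alpha>) + (1/\<alpha> - 1))"
    by (simp add: powr_add[symmetric])
  also have "\<dots> = real R" by simp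
  finally show ?thesis .
qed

fun bal :: "real \<Rightarrow> 'a ltree \<Rightarrow> bool" where
  "bal s (Leaf _) = True"
| "bal s (Node l r) = (bal s l \<and> bal s r \<and>
     s * real (nleaves r) \<le> real (nleaves l) + s \<and> s * real (nleaves l) \<le> real (nleaves r) + s)"

lemma bal_ins:
  assumes "0<\<alpha>" "\<alpha>\<le>1" "\<And>pth. 0 \<le> p pth \<and> p pth \<le> 1" "bal (2 powr (1-1/\<alpha>)) t"
  shows "bal (2 powr (1-1/\<alpha>)) (ins \<alpha> p pth y t)"
  using assms(4)
proof (induction t arbitrary: pth)
  case (Leaf x)
  then show ?case by simp
next
  case (Node l r)
  let ?s = "2 powr (1-1/\<alpha>)"
  have s0: "?s > 0" by simp
  show ?case
  proof (cases "obj (p pth) (nleaves l) (nleaves r) \<alpha> > 0")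
    case True
    have "?s * real (nleaves r) < real (nleaves l)"
      using obj_right[OF assms(1,2) _ _ nleaves_pos nleaves_pos True] assms(3) by blast
    then show ?thesis using True Node s0 by (simp add: ins_nleaves distrib_left)
  next
    case False
    have "?s * real (nleaves l) \<le> real (nleaves r)"
      using obj_left[OF assms(1,2) _ _ nleaves_pos nleaves_pos False] assms(3) by blast
    then show ?thesis using False Node s0 by (simp add: ins_nleaves distrib_left)
  qed
qed

lemma bal_depth:
  assumes "s > 0" "bal s t" "depth t \<ge> 1"
  shows "(1+s) ^ (depth t - 1) \<le> real (nleaves t) - 1"
  using assms(2,3)
proof (induction t)
  case (Leaf x)
  then show ?case by simp
next
  case (Node l r)
  have key: "(1+s) ^ (depth (Node l r) - 1) \<le> real (nleaves (Node l r)) - 1"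
    if B: "bal s m" "s * real (nleaves m) \<le> real (nleaves k) + s"
      and D: "depth (Node l r) = Suc (depth m)"
      and N: "nleaves (Node l r) = nleaves m + nleaves k"
      and IH: "depth m \<ge> 1 \<Longrightarrow> (1+s) ^ (depth m - 1) \<le> real (nleaves m) - 1"
    for m k :: "'a ltree"
  proof (cases "depth m = 0")
    case True
    then show ?thesis using D N nleaves_pos[of m] nleaves_pos[of k] by simp
  next
    case False
    have ih: "(1+s) ^ (depth m - 1) \<le> real (nleaves m) - 1" using IH False by simp
    have k: "real (nleaves k) \<ge> s * (real (nleaves m) - 1)" using B(2) by (simp add: algebra_simps)
    have "(1+s) ^ (depth (Node l r) - 1) = (1+s) * (1+s) ^ (depth m - 1)"
      using D False by (cases "depth m") auto
    also have "\<dots> \<le> (1+s) * (real (nleaves m) - 1)"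
      using ih assms(1) by (simp add: mult_left_mono)
    also have "\<dots> \<le> real (nleaves (Node l r)) - 1" using N k by (simp add: algebra_simps)
    finally show ?thesis .
  qed
  show ?case
  proof (cases "depth l \<le> depth r")
    case True
    show ?thesis
      by (rule key[of r l]) (use Node True in \<open>auto simp: max_def\<close>)
  next
    case False
    show ?thesis
      by (rule key[of l r]) (use Node False in \<open>auto simp: max_def\<close>)
  qed
qed

lemma build_aux_inv:
  assumes "0<\<alpha>" "\<alpha>\<le>1" "\<And>i pth. 0 \<le> ps i pth \<and> ps i pth \<le> 1"
    "bal (2 powr (1-1/\<alpha>)) t" "nleaves t = card (labels t)"
  shows "bal (2 powr (1-1/\<alpha>)) (build_aux \<alpha> ps i ys t) \<and>
    nleaves (build_aux \<alpha> ps i ys t) = card (labels (build_aux \<alpha> ps i ys t)) \<and>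
    labels (build_aux \<alpha> ps i ys t) = labels t \<union> set ys"
  using assms(4,5)
proof (induction ys arbitrary: i t)
  case Nil
  then show ?case by simp
next
  case (Cons y ys)
  let ?t = "step \<alpha> (ps i) y t"
  have b: "bal (2 powr (1-1/\<alpha>)) ?t"
    using Cons.prems bal_ins[OF assms(1,2), of "ps i"] assms(3) unfolding step_def by auto
  have n: "nleaves ?t = card (labels ?t)"
    using Cons.prems finite_labels[of t]
    unfolding step_def by (auto simp: ins_nleaves ins_labels)
  have l: "labels ?t = insert y (labels t)"
    unfolding step_def by (auto simp: ins_labels)
  show ?case using Cons.IH[OF b n, of "Suc i"] l by auto
qed

theorem theorem3:
  fixes \<alpha> :: real and ys :: "'a list" and ps :: "nat \<Rightarrow> bool list \<Rightarrow> real"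
  assumes "0 < \<alpha>" and "\<alpha> \<le> 1"
    and "ys \<noteq> []"
    and "\<And>i pth. 0 \<le> ps i pth \<and> ps i pth \<le> 1"
  shows "real (depth (build \<alpha> ps ys))
           \<le> ln (real (card (set ys))) / ln (1 / kappa \<alpha>) + 2"
proof -
  obtain y zs where ys: "ys = y # zs" using assms(3) by (cases ys) auto
  let ?s = "2 powr (1-1/\<alpha>)"
  let ?t = "build \<alpha> ps ys"
  have inv: "bal ?s ?t \<and> nleaves ?t = card (labels ?t) \<and> labels ?t = set ys"
    using build_aux_inv[OF assms(1,2,4), where t="Leaf y" and i=0 and ys=zs] ys by auto
  have n: "nleaves ?t = card (set ys)" using inv by simp
  have q: "1 / kappa \<alpha> = 1 + ?s" unfolding kappa_def by simp
  have s0: "?s > 0" by simp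
  have lq: "ln (1 + ?s) > 0" using s0 by (intro ln_gt_zero) simp
  have ln0: "ln (real (card (set ys))) \<ge> 0" using nleaves_pos[of ?t] n by simp
  show ?thesis
  proof (cases "depth ?t = 0")
    case True
    then show ?thesis using ln0 lq q by simp
  next
    case False
    have "(1+?s) ^ (depth ?t - 1) \<le> real (nleaves ?t) - 1"
      using bal_depth[OF s0, of ?t] inv False by linarith
    hence "ln ((1+?s) ^ (depth ?t - 1)) \<le> ln (real (nleaves ?t))"
    proof -
      have "(0::real) < (1+?s) ^ (depth ?t - 1)" using s0 by (intro zero_less_power) linarith
      thus ?thesis using \<open>(1+?s) ^ (depth ?t - 1) \<le> real (nleaves ?t) - 1\<close> by (subst ln_le_cancel_iff) auto
    qed
    hence "real (depth ?t - 1) * ln (1+?s) \<le> ln (real (card (set ys)))"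
      using s0 n by (simp add: ln_realpow)
    hence "real (depth ?t - 1) \<le> ln (real (card (set ys))) / ln (1+?s)"
      using lq by (simp add: field_simps)
    then show ?thesis using q False by simp
  qed
qed

end
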